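(* Let $k\ge 2$. There exist hypercube deliberation spaces with arbitrarily large numbers $n$ of agents in which a deliberation may take $\Omega(2^{\sqrt{n}/2})$ $k$-compromise transitions. That is, there are a constant $c>0$ and, for arbitrarily large $n$, a hypercube deliberation space with $n$ agents, an initial coalition structure, and a sequence of at least $c\,2^{\sqrt{n}/2}$ consecutive $k$-compromise transitions starting from that structure.
   Context: A hypercube deliberation space of dimension $d$ consists of the proposal set $\{0,1\}^d$, a finite multiset of $n$ agents, each a point of $\{0,1\}^d$, and the Hamming distance $\rho$; the status quo is $\mathbf{0}$. An agent $v$ supports a proposal $p$ if $\rho(v,p)<\rho(v,\mathbf{0})$. A coalition is a pair $(C,p)$ where $C$ is a set of agents and $p$ is a proposal supported by all agents of $C$. A coalition structure is a partition of the agents into coalitions. A $k$-compromise transition from a coalition structure is the following move. Take at most $k$ of its coalitions $(C_1,p_1),\dots,(C_\ell,p_\ell)$ with $\ell\le k$, a set $S\subseteq C_1\cup\dots\cup C_\ell$ meeting each $C_i$, and a proposal $p$ supported by all agents of $S$ with $|S|>|C_i|$ for every $i$. The agents of $S$ leave their coalitions and form the coalition $(S,p)$. A deliberation is a sequence of such transitions. *)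

theory Defs
  imports Complex_Main
begin

text \<open>Hypercube deliberation space of dimension d: points of {0,1}^d are encoded
  as subsets of {0..<d} (the set of coordinates equal to 1); the status quo 0 is {}.
  The n agents (a multiset of points) are indexed by {0..<n} with positions pos i.\<close>

definition hamming :: "nat set \<Rightarrow> nat set \<Rightarrow> nat" where
  "hamming a b = card ((a - b) \<union> (b - a))"

definition is_point :: "nat \<Rightarrow> nat set \<Rightarrow> bool" where
  "is_point d p \<longleftrightarrow> p \<subseteq> {..<d}"

definition supports :: "nat set \<Rightarrow> nat set \<Rightarrow> bool" where
  "supports v p \<longleftrightarrow> hamming v p < hamming v {}"

definition is_coalition :: "nat \<Rightarrow> (nat \<Rightarrow> nat set) \<Rightarrow> nat set \<times> nat set \<Rightarrow> bool" where
  "is_coalition d pos Cp \<longleftrightarrow> is_point d (snd Cp) \<and> (\<forall>i\<in>fst Cp. supports (pos i) (snd Cp))"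

definition coalition_structure ::
  "nat \<Rightarrow> nat \<Rightarrow> (nat \<Rightarrow> nat set) \<Rightarrow> (nat set \<times> nat set) set \<Rightarrow> bool" where
  "coalition_structure d n pos D \<longleftrightarrow>
     (\<forall>Cp\<in>D. is_coalition d pos Cp \<and> fst Cp \<noteq> {}) \<and>
     (\<forall>Cp\<in>D. \<forall>Cq\<in>D. Cp \<noteq> Cq \<longrightarrow> fst Cp \<inter> fst Cq = {}) \<and>
     (\<Union>Cp\<in>D. fst Cp) = {..<n}"

definition compromise_transition ::
  "nat \<Rightarrow> nat \<Rightarrow> (nat \<Rightarrow> nat set) \<Rightarrow> nat \<Rightarrow>
   (nat set \<times> nat set) set \<Rightarrow> (nat set \<times> nat set) set \<Rightarrow> bool" where
  "compromise_transition d n pos k D D' \<longleftrightarrow>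
     (\<exists>T S p. T \<subseteq> D \<and> T \<noteq> {} \<and> card T \<le> k \<and>
        S \<subseteq> (\<Union>Cp\<in>T. fst Cp) \<and> (\<forall>Cp\<in>T. S \<inter> fst Cp \<noteq> {}) \<and>
        is_point d p \<and> (\<forall>i\<in>S. supports (pos i) p) \<and>
        (\<forall>Cp\<in>T. card S > card (fst Cp)) \<and>
        D' = {(fst Cp - S, snd Cp) | Cp. Cp \<in> D \<and> fst Cp - S \<noteq> {}} \<union> {(S, p)})"

end

theory Submission
  imports Defs "HOL-Library.Multiset"
begin


inductive astep :: "nat multiset \<Rightarrow> nat multiset \<Rightarrow> bool" where
  amerge: "a \<ge> 1 \<Longrightarrow> b \<ge> 1 \<Longrightarrow> astep (N + {#a, b#}) (N + {#a + b#})"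
| asplit: "0 < u \<Longrightarrow> u < a \<Longrightarrow> 0 < v \<Longrightarrow> v < b \<Longrightarrow> a - u + (b - v) > a \<Longrightarrow>
     a - u + (b - v) > b \<Longrightarrow> astep (N + {#a, b#}) (N + {#a - u + (b - v), u, v#})"

definition lreach :: "nat multiset \<Rightarrow> nat multiset \<Rightarrow> nat \<Rightarrow> bool" where
  "lreach M M' m \<longleftrightarrow> (\<exists>m'\<ge>m. (astep ^^ m') M M')"

lemma lreach_refl: "lreach M M 0"
  unfolding lreach_def by (rule exI[of _ 0]) auto

lemma lreach_trans: "lreach M1 M2 a \<Longrightarrow> lreach M2 M3 b \<Longrightarrow> lreach M1 M3 (a + b)"
  unfolding lreach_def
proof (elim exE conjE)
  fix x y assume "x \<ge> a" "(astep ^^ x) M1 M2" "y \<ge> b" "(astep ^^ y) M2 M3"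
  then have "(astep ^^ (x + y)) M1 M3" by (metis relcomppI relpowp_add)
  then show "\<exists>m'\<ge>a + b. (astep ^^ m') M1 M3" using \<open>x \<ge> a\<close> \<open>y \<ge> b\<close> by (intro exI[of _ "x+y"]) auto
qed

lemma lreach_step: "astep M M' \<Longrightarrow> lreach M M' 1"
  unfolding lreach_def by (rule exI[of _ 1]) auto

lemma lreach_mono: "lreach M M' m \<Longrightarrow> m' \<le> m \<Longrightarrow> lreach M M' m'"
  unfolding lreach_def by (meson order_trans)

lemma lreach_eq: "lreach M M' m \<Longrightarrow> M = A \<Longrightarrow> M' = B \<Longrightarrow> lreach A B m" by simp

abbreviation rep :: "nat \<Rightarrow> nat multiset" where "rep J \<equiv> replicate_mset J 1"

lemma rep_add: "rep (a + b) = rep a + rep b" by (induction a) auto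

definition low0 :: "nat \<Rightarrow> nat multiset" where "low0 k = mset (map (\<lambda>p. 2*p+2) [0..<k])"
definition low1 :: "nat \<Rightarrow> nat multiset" where "low1 k = mset (map (\<lambda>p. 2*p+3) [0..<k])"

lemma low0_Suc: "low0 (Suc k) = low0 k + {#2*k+2#}" by (simp add: low0_def)
lemma low1_Suc: "low1 (Suc k) = low1 k + {#2*k+3#}" by (simp add: low1_def)

lemma lreach_tr: "lreach A B a \<Longrightarrow> lreach B' C b \<Longrightarrow> B = B' \<Longrightarrow> m \<le> a + b \<Longrightarrow> lreach A C m"
  by (metis lreach_trans lreach_mono)

lemma lreach_tr2: "lreach A B a \<Longrightarrow> lreach B' C b \<Longrightarrow> A0 = A \<Longrightarrow> B = B' \<Longrightarrow> C = C0 \<Longrightarrow> m \<le> a + b \<Longrightarrow> lreach A0 C0 m"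
  by (metis lreach_trans lreach_mono)

lemma lreach_st: "astep A' B' \<Longrightarrow> A = A' \<Longrightarrow> B = B' \<Longrightarrow> lreach A B 1"
  using lreach_step by blast

lemma grow: "x \<ge> 1 \<Longrightarrow> lreach (Ctx + rep x) (Ctx + {#x#}) 0"
proof (induction x arbitrary: Ctx rule: nat_induct_at_least)
  case base then show ?case by (simp add: lreach_refl)
next
  case (Suc x)
  have a: "lreach ((Ctx + {#1#}) + rep x) ((Ctx + {#1#}) + {#x#}) 0" by (rule Suc.IH)
  have "astep (Ctx + {#x, 1#}) (Ctx + {#x + 1#})" using Suc.hyps by (intro amerge) auto
  then have b: "lreach ((Ctx + {#1#}) + {#x#}) (Ctx + {#Suc x#}) 1"
    by (rule lreach_st) (simp_all add: multiset_eq_iff)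
  show ?case by (rule lreach_tr2[OF a b]) (simp_all add: multiset_eq_iff)
qed

lemma build: "lreach (Ctx + rep (k*(k+1) + J)) (Ctx + low0 k + rep J) 0"
proof (induction k arbitrary: J)
  case 0 then show ?case by (simp add: low0_def lreach_refl)
next
  case (Suc k)
  have e: "Suc k * (Suc k + 1) + J = k*(k+1) + ((2*k+2) + J)" by (simp add: algebra_simps)
  have a: "lreach (Ctx + rep (k*(k+1) + ((2*k+2) + J))) (Ctx + low0 k + rep ((2*k+2) + J)) 0"
    by (rule Suc.IH)
  have b: "lreach ((Ctx + low0 k + rep J) + rep (2*k+2)) ((Ctx + low0 k + rep J) + {#2*k+2#}) 0"
    by (rule grow) simp
  show ?case unfolding e
    by (rule lreach_tr2[OF a b]) (simp_all add: multiset_eq_iff low0_Suc)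
qed

lemma carryQ: "J + j \<ge> 1 \<Longrightarrow> lreach (Ctx + {#2*j+1#} + low1 j + rep J) (Ctx + {#2*j+2#} + low0 j + rep (J + j - 1)) 1"
proof (induction j arbitrary: Ctx J)
  case 0
  then obtain J' where J: "J = Suc J'" by (cases J) auto
  have st: "astep ((Ctx + rep J') + {#1, 1#}) ((Ctx + rep J') + {#1 + 1#})" by (intro amerge) auto
  show ?case by (rule lreach_st[OF st]) (use J in \<open>simp_all add: multiset_eq_iff low0_def low1_def\<close>)
next
  case (Suc j)
  have st: "astep ((Ctx + low1 j + rep J) + {#2*j+3, 2*j+3#}) ((Ctx + low1 j + rep J) + {#(2*j+3) - 1 + ((2*j+3) - (2*j+1)), 1, 2*j+1#})"
    by (intro asplit) auto
  have b: "lreach ((Ctx + {#2*j+4#}) + {#2*j+1#} + low1 j + rep (J+1)) ((Ctx + {#2*j+4#}) + {#2*j+2#} + low0 j + rep (J + 1 + j - 1)) 1"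
    by (rule Suc.IH) simp
  show ?case
    by (rule lreach_tr2[OF lreach_step[OF st] b]) (simp_all add: multiset_eq_iff low0_Suc low1_Suc)
qed

lemma cascade: "k + J \<ge> 1 \<Longrightarrow> lreach (Ctx + {#2*k+2#} + low1 k + rep J) (Ctx + {#2*k+3#} + low0 k + rep (J + k - 1)) 1"
proof (cases k)
  case 0
  assume "k + J \<ge> 1"
  with 0 obtain J' where J: "J = Suc J'" by (cases J) auto
  have st: "astep ((Ctx + rep J') + {#2, 1#}) ((Ctx + rep J') + {#2 + 1#})" by (intro amerge) auto
  show ?thesis by (rule lreach_st[OF st]) (use J 0 in \<open>simp_all add: multiset_eq_iff low0_def low1_def\<close>)
next
  case (Suc j)
  have st: "astep ((Ctx + low1 j + rep J) + {#2*j+4, 2*j+3#}) ((Ctx + low1 j + rep J) + {#(2*j+4) - 1 + ((2*j+3) - (2*j+1)), 1, 2*j+1#})"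
    by (intro asplit) auto
  have b: "lreach ((Ctx + {#2*j+5#}) + {#2*j+1#} + low1 j + rep (J+1)) ((Ctx + {#2*j+5#}) + {#2*j+2#} + low0 j + rep (J + 1 + j - 1)) 1"
    by (rule carryQ) simp
  show ?thesis using Suc
    by (intro lreach_tr2[OF lreach_step[OF st] b]) (simp_all add: multiset_eq_iff low0_Suc low1_Suc)
qed

lemma counter: "J \<ge> k \<Longrightarrow> lreach (Ctx + low0 k + rep J) (Ctx + low1 k + rep (J - k)) (2^k - 1)"
proof (induction k arbitrary: Ctx J)
  case 0 then show ?case by (simp add: low0_def low1_def lreach_refl)
next
  case (Suc k)
  have a: "lreach ((Ctx + {#2*k+2#}) + low0 k + rep J) ((Ctx + {#2*k+2#}) + low1 k + rep (J - k)) (2^k - 1)"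
    using Suc by (intro Suc.IH) simp
  have b: "lreach (Ctx + {#2*k+2#} + low1 k + rep (J - k)) (Ctx + {#2*k+3#} + low0 k + rep (J - k + k - 1)) 1"
    using Suc.prems by (intro cascade) simp
  have c: "lreach ((Ctx + {#2*k+3#}) + low0 k + rep (J - 1)) ((Ctx + {#2*k+3#}) + low1 k + rep (J - 1 - k)) (2^k - 1)"
    using Suc by (intro Suc.IH) simp
  have e: "J - k + k - 1 = J - 1" using Suc.prems by simp
  have ab: "lreach ((Ctx + {#2*k+2#}) + low0 k + rep J) (Ctx + {#2*k+3#} + low0 k + rep (J - 1)) (2^k - 1 + 1)"
    using lreach_tr[OF a b] e by simp
  show ?case
    by (rule lreach_tr2[OF ab c]) (simp_all add: multiset_eq_iff low0_Suc low1_Suc)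
qed



abbreviation blk :: "nat set set \<Rightarrow> (nat set \<times> nat set) set" where
  "blk P \<equiv> (\<lambda>X. (X, {0::nat})) ` P"

definition good :: "nat \<Rightarrow> nat set set \<Rightarrow> nat multiset \<Rightarrow> bool" where
  "good n P M \<longleftrightarrow> finite P \<and> {} \<notin> P \<and> (\<forall>X\<in>P. \<forall>Y\<in>P. X \<noteq> Y \<longrightarrow> X \<inter> Y = {}) \<and>
     \<Union>P = {..<n} \<and> image_mset card (mset_set P) = M"

lemma supp00: "supports {0} {0}"
  unfolding supports_def hamming_def by simp

lemma trans_core:
  assumes g: "good n P M" and AB: "A \<in> P" "B \<in> P" "A \<noteq> B"
    and UV: "U \<subseteq> A" "V \<subseteq> B" and Sd: "S = (A - U) \<union> (B - V)"
    and ne: "A - U \<noteq> {}" "B - V \<noteq> {}" and cA: "card S > card A" and cB: "card S > card B"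
    and k: "k \<ge> 2"
  shows "compromise_transition 1 n (\<lambda>_. {0}) k (blk P) (blk (insert S ((P - {A,B}) \<union> ({U,V} - {{}}))))"
proof -
  have disj: "\<And>X Y. X \<in> P \<Longrightarrow> Y \<in> P \<Longrightarrow> X \<noteq> Y \<Longrightarrow> X \<inter> Y = {}" using g by (auto simp: good_def)
  have AB0: "A \<inter> B = {}" using disj AB by blast
  have other: "X - S = X" if "X \<in> P" "X \<noteq> A" "X \<noteq> B" for X
    using disj[OF that(1) AB(1)] disj[OF that(1) AB(2)] that Sd by blast
  have AS: "A - S = U" using UV Sd AB0 by blast
  have BS: "B - S = V" using UV Sd AB0 by blast
  have nemp: "X \<noteq> {}" if "X \<in> P" for X using g that by (auto simp: good_def)
  have setq: "{X - S | X. X \<in> P \<and> X - S \<noteq> {}} = (P - {A,B}) \<union> ({U,V} - {{}})"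
  proof (intro equalityI subsetI)
    fix Z assume "Z \<in> {X - S | X. X \<in> P \<and> X - S \<noteq> {}}"
    then obtain X where X: "X \<in> P" "X - S \<noteq> {}" "Z = X - S" by blast
    show "Z \<in> (P - {A,B}) \<union> ({U,V} - {{}})"
    proof (cases "X = A \<or> X = B")
      case True then show ?thesis using X AS BS by auto
    next
      case False then show ?thesis using X other by auto
    qed
  next
    fix Z assume Z: "Z \<in> (P - {A,B}) \<union> ({U,V} - {{}})"
    show "Z \<in> {X - S | X. X \<in> P \<and> X - S \<noteq> {}}"
    proof (cases "Z \<in> P - {A,B}")
      case True then show ?thesis using other[of Z] nemp[of Z] by (intro CollectI exI[of _ Z]) auto
    next
      case False
      then have "Z = U \<and> U \<noteq> {} \<or> Z = V \<and> V \<noteq> {}" using Z by auto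
      then show ?thesis using AS BS AB by blast
    qed
  qed
  have eq: "blk (insert S ((P - {A,B}) \<union> ({U,V} - {{}}))) =
     {(fst Cp - S, snd Cp) | Cp. Cp \<in> blk P \<and> fst Cp - S \<noteq> {}} \<union> {(S, {0})}"
  proof -
    have "{(fst Cp - S, snd Cp) | Cp. Cp \<in> blk P \<and> fst Cp - S \<noteq> {}} = blk {X - S | X. X \<in> P \<and> X - S \<noteq> {}}"
      by auto
    then show ?thesis unfolding setq by auto
  qed
  show ?thesis
    unfolding compromise_transition_def
  proof (rule exI[of _ "blk {A,B}"], rule exI[of _ S], rule exI[of _ "{0}"], intro conjI)
    show "blk {A, B} \<subseteq> blk P" using AB by auto
    show "blk {A, B} \<noteq> {}" by simp
    show "card (blk {A, B}) \<le> k" using k AB(3) by simp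
    show "S \<subseteq> (\<Union>Cp\<in>blk {A, B}. fst Cp)" using Sd by auto
    show "\<forall>Cp\<in>blk {A, B}. S \<inter> fst Cp \<noteq> {}" using Sd ne by auto
    show "is_point 1 {0}" by (simp add: is_point_def)
    show "\<forall>i\<in>S. supports ((\<lambda>_::nat. {0::nat}) i) {0}" using supp00 by simp
    show "\<forall>Cp\<in>blk {A, B}. card (fst Cp) < card S" using cA cB by auto
    show "blk (insert S ((P - {A,B}) \<union> ({U,V} - {{}}))) =
     {(fst Cp - S, snd Cp) | Cp. Cp \<in> blk P \<and> fst Cp - S \<noteq> {}} \<union> {(S, {0})}" by (rule eq)
  qed
qed

lemma good_core:
  assumes g: "good n P M" and AB: "A \<in> P" "B \<in> P" "A \<noteq> B"
    and UV: "U \<subseteq> A" "V \<subseteq> B" and Sd: "S = (A - U) \<union> (B - V)"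
    and ne: "A - U \<noteq> {}" "B - V \<noteq> {}"
  shows "good n (insert S ((P - {A,B}) \<union> ({U,V} - {{}})))
           (add_mset (card S) (image_mset card (mset_set (P - {A,B})) + image_mset card (mset_set ({U,V} - {{}}))))"
proof -
  have fin: "finite P" using g by (simp add: good_def)
  have disj: "\<And>X Y. X \<in> P \<Longrightarrow> Y \<in> P \<Longrightarrow> X \<noteq> Y \<Longrightarrow> X \<inter> Y = {}" using g by (auto simp: good_def)
  have AB0: "A \<inter> B = {}" using disj AB by blast
  have nemp: "X \<noteq> {}" if "X \<in> P" for X using g that by (auto simp: good_def)
  have un: "\<Union>P = {..<n}" using g by (simp add: good_def)
  let ?P0 = "P - {A,B}" and ?W = "{U,V} - {{}}"
  have f0: "finite ?P0" using fin by simp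
  have fW: "finite ?W" by simp
  have d0W: "?P0 \<inter> ?W = {}"
  proof -
    have "X \<noteq> U" if "X \<in> ?P0" "U \<noteq> {}" for X using disj[of X A] that AB UV nemp by blast
    moreover have "X \<noteq> V" if "X \<in> ?P0" "V \<noteq> {}" for X using disj[of X B] that AB UV nemp by blast
    ultimately show ?thesis by blast
  qed
  have Snot: "S \<notin> ?P0 \<union> ?W"
  proof
    assume "S \<in> ?P0 \<union> ?W"
    moreover have "S \<noteq> X" if "X \<in> ?P0" for X using disj[of X A] that AB Sd ne by blast
    moreover have "S \<noteq> U" using Sd ne by blast
    moreover have "S \<noteq> V" using Sd ne by blast
    ultimately show False by blast
  qed
  have ms: "mset_set (insert S (?P0 \<union> ?W)) = add_mset S (mset_set ?P0 + mset_set ?W)"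
    using Snot f0 fW d0W by (simp add: mset_set_Union)
  show ?thesis
    unfolding good_def
  proof (intro conjI)
    show "finite (insert S (?P0 \<union> ?W))" using f0 by simp
    show "{} \<notin> insert S (?P0 \<union> ?W)" using Sd ne nemp by auto
    show "\<forall>X\<in>insert S (?P0 \<union> ?W). \<forall>Y\<in>insert S (?P0 \<union> ?W). X \<noteq> Y \<longrightarrow> X \<inter> Y = {}"
    proof (intro ballI impI)
      fix X Y assume X: "X \<in> insert S (?P0 \<union> ?W)" and Y: "Y \<in> insert S (?P0 \<union> ?W)" and XY: "X \<noteq> Y"
      have sub: "Z \<subseteq> A \<or> Z \<subseteq> B" if "Z \<in> ?W" for Z using that UV by auto
      have dA: "Z \<inter> A = {} \<and> Z \<inter> B = {}" if "Z \<in> ?P0" for Z using that disj AB by auto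
      have dS: "S \<inter> U = {}" "S \<inter> V = {}" using Sd UV AB0 by auto
      have dUV: "U \<inter> V = {}" using UV AB0 by auto
      have dSP: "S \<inter> Z = {}" "Z \<inter> S = {}" if "Z \<in> ?P0" for Z using dA[OF that] Sd by blast+
      have dUP: "U \<inter> Z = {}" "V \<inter> Z = {}" "Z \<inter> U = {}" "Z \<inter> V = {}" if "Z \<in> ?P0" for Z using dA[OF that] UV by blast+
      have dPP: "Z \<inter> Z' = {}" if "Z \<in> ?P0" "Z' \<in> ?P0" "Z \<noteq> Z'" for Z Z' using disj that by blast
      have dS2: "U \<inter> S = {}" "V \<inter> S = {}" "V \<inter> U = {}" using dS dUV by blast+
      have cx: "X = S \<or> X \<in> ?P0 \<or> X = U \<or> X = V" using X by blast
      have cy: "Y = S \<or> Y \<in> ?P0 \<or> Y = U \<or> Y = V" using Y by blast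
      from cx cy XY show "X \<inter> Y = {}"
      proof (elim disjE)
      qed (simp_all only: dSP dUP dPP dS dUV dS2 Int_absorb simp_thms)
    qed
    show "\<Union>(insert S (?P0 \<union> ?W)) = {..<n}"
    proof -
      have "\<Union>(insert S (?P0 \<union> ?W)) = \<Union>P"
        using Sd UV AB by auto
      then show ?thesis using un by simp
    qed
    show "image_mset card (mset_set (insert S (?P0 \<union> ?W))) =
      add_mset (card S) (image_mset card (mset_set ?P0) + image_mset card (mset_set ?W))"
      unfolding ms by simp
  qed
qed



lemma pick1:
  assumes "finite P" "image_mset card (mset_set P) = add_mset a N"
  shows "\<exists>A. A \<in> P \<and> card A = a \<and> image_mset card (mset_set (P - {A})) = N"
proof -
  have "a \<in># image_mset card (mset_set P)" using assms(2) by simp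
  then have "a \<in> card ` P" using assms(1) by simp
  then obtain A where A: "A \<in> P" "card A = a" by blast
  have mA: "mset_set P = add_mset A (mset_set (P - {A}))" by (rule mset_set.remove[OF assms(1) A(1)])
  have "image_mset card (mset_set (P - {A})) = N" using assms(2) A unfolding mA by simp
  then show ?thesis using A by blast
qed

lemma pick:
  assumes "finite P" "image_mset card (mset_set P) = N + {#a, b#}"
  shows "\<exists>A B. A \<in> P \<and> B \<in> P \<and> A \<noteq> B \<and> card A = a \<and> card B = b \<and>
           image_mset card (mset_set (P - {A,B})) = N"
proof -
  have "image_mset card (mset_set P) = add_mset a (add_mset b N)" using assms(2) by simp
  from pick1[OF assms(1) this] obtain A where A: "A \<in> P" "card A = a" "image_mset card (mset_set (P - {A})) = add_mset b N" by blast
  from pick1[OF _ A(3)] assms(1) obtain B where B: "B \<in> P - {A}" "card B = b" "image_mset card (mset_set (P - {A} - {B})) = N" by blast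
  have "P - {A} - {B} = P - {A,B}" by auto
  then show ?thesis using A B by (rule_tac exI[of _ A], rule_tac exI[of _ B]) auto
qed

lemma conc_step:
  assumes g: "good n P M" and st: "astep M M'" and k: "k \<ge> 2"
  shows "\<exists>P'. compromise_transition 1 n (\<lambda>_. {0}) k (blk P) (blk P') \<and> good n P' M'"
  using st
proof cases
  case (amerge a b N)
  have fin: "finite P" using g by (simp add: good_def)
  obtain A B where AB: "A \<in> P" "B \<in> P" "A \<noteq> B" "card A = a" "card B = b"
     "image_mset card (mset_set (P - {A,B})) = N"
  proof -
    have "image_mset card (mset_set P) = N + {#a, b#}" using g amerge by (simp add: good_def)
    from pick[OF fin this] show ?thesis using that by blast
  qed
  have disj: "A \<inter> B = {}" using g AB by (auto simp: good_def)
  have "A \<subseteq> {..<n}" "B \<subseteq> {..<n}" using g AB unfolding good_def by blast+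
  then have fA: "finite A" "finite B" using finite_subset by blast+
  let ?S = "(A - {}) \<union> (B - {})"
  have cS: "card ?S = a + b" using disj fA AB by (simp add: card_Un_disjoint)
  have ne: "A - {} \<noteq> {}" "B - {} \<noteq> {}" using AB amerge by auto
  have cA: "card A < card ?S" "card B < card ?S" using cS AB amerge by auto
  note tr0 = trans_core[where U="{}" and V="{}", OF g AB(1-3) empty_subsetI empty_subsetI refl ne cA k]
  note gd0 = good_core[where U="{}" and V="{}", OF g AB(1-3) empty_subsetI empty_subsetI refl ne]
  have e1: "insert ?S ((P - {A,B}) \<union> ({{},{}} - {{}})) = insert (A \<union> B) (P - {A,B})" by simp
  have e2: "add_mset (card ?S) (image_mset card (mset_set (P - {A,B})) + image_mset card (mset_set ({{},{}} - {{}}))) = M'"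
    using AB cS amerge by simp
  show ?thesis
    by (rule exI[of _ "insert (A \<union> B) (P - {A,B})"]) (use tr0[unfolded e1] gd0[unfolded e1 e2] in \<open>rule conjI\<close>)
next
  case (asplit u a v b N)
  have fin: "finite P" using g by (simp add: good_def)
  obtain A B where AB: "A \<in> P" "B \<in> P" "A \<noteq> B" "card A = a" "card B = b"
     "image_mset card (mset_set (P - {A,B})) = N"
  proof -
    have "image_mset card (mset_set P) = N + {#a, b#}" using g asplit by (simp add: good_def)
    from pick[OF fin this] show ?thesis using that by blast
  qed
  have disj: "A \<inter> B = {}" using g AB by (auto simp: good_def)
  have "A \<subseteq> {..<n}" "B \<subseteq> {..<n}" using g AB unfolding good_def by blast+
  then have fA: "finite A" "finite B" using finite_subset by blast+
  have "u \<le> card A" "v \<le> card B" using asplit AB by simp_all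
  then obtain U V where U: "U \<subseteq> A" "card U = u" "finite U" and V: "V \<subseteq> B" "card V = v" "finite V"
    by (meson obtain_subset_with_card_n)
  let ?S = "(A - U) \<union> (B - V)"
  have cAU: "card (A - U) = a - u" using U fA AB by (simp add: card_Diff_subset finite_subset)
  have cBV: "card (B - V) = b - v" using V fA AB by (simp add: card_Diff_subset finite_subset)
  have cS: "card ?S = a - u + (b - v)" using disj fA cAU cBV by (subst card_Un_disjoint) auto
  have ne1: "A - U \<noteq> {}"
  proof
    assume "A - U = {}" with cAU asplit show False by simp
  qed
  have ne2: "B - V \<noteq> {}"
  proof
    assume "B - V = {}" with cBV asplit show False by simp
  qed
  have cA: "card A < card ?S" "card B < card ?S" using cS AB asplit by auto
  note tr = trans_core[OF g AB(1-3) U(1) V(1) refl ne1 ne2 cA k]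
  note gd = good_core[OF g AB(1-3) U(1) V(1) refl ne1 ne2]
  have Une: "U \<noteq> {}" "V \<noteq> {}" using U V asplit by auto
  have UV: "U \<noteq> V" using U(1) V(1) disj Une(1) by blast
  have W: "{U,V} - {{}} = {U,V}" using Une by auto
  have mW: "image_mset card (mset_set ({U,V} - {{}})) = {#u, v#}" using W UV U V by simp
  have e2: "add_mset (card ?S) (image_mset card (mset_set (P - {A,B})) + image_mset card (mset_set ({U,V} - {{}}))) = M'"
    using AB cS asplit mW by simp
  show ?thesis
    by (rule exI[of _ "insert ?S ((P - {A,B}) \<union> ({U,V} - {{}}))"]) (use tr gd[unfolded e2] in \<open>rule conjI\<close>)
qed

lemma conc_chain0:
  assumes "(astep ^^ m) M M'" "good n P M" "k \<ge> 2"
  shows "\<exists>f P'. f 0 = blk P \<and> (\<forall>j<m. compromise_transition 1 n (\<lambda>_. {0}) k (f j) (f (Suc j))) \<and> f m = blk P' \<and> good n P' M'"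
  using assms(1)
proof (induction m arbitrary: M')
  case 0
  then have "M' = M" by simp
  then show ?case using assms(2) by (intro exI[of _ "\<lambda>_. blk P"] exI[of _ P]) simp
next
  case (Suc m)
  obtain M2 where a2: "(astep ^^ m) M M2" and b2: "astep M2 M'" using Suc.prems by auto
  obtain f P' where f: "f 0 = blk P" "\<forall>j<m. compromise_transition 1 n (\<lambda>_. {0}) k (f j) (f (Suc j))"
    "f m = blk P'" "good n P' M2" using Suc.IH[OF a2] by (elim exE conjE) (rule that)
  obtain P'' where P'': "compromise_transition 1 n (\<lambda>_. {0}) k (blk P') (blk P'')" "good n P'' M'"
    using conc_step[OF f(4) b2 assms(3)] by blast
  let ?g = "f(Suc m := blk P'')"
  have g1: "?g 0 = blk P" using f by simp
  have g2: "\<forall>j<Suc m. compromise_transition 1 n (\<lambda>_. {0}) k (?g j) (?g (Suc j))"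
  proof (intro allI impI)
    fix j assume "j < Suc m"
    then consider "j < m" | "j = m" by linarith
    then show "compromise_transition 1 n (\<lambda>_. {0}) k (?g j) (?g (Suc j))"
    proof cases
      case 1 then show ?thesis using f(2) by simp
    next
      case 2 then show ?thesis using f(3) P''(1) by simp
    qed
  qed
  have g3: "?g (Suc m) = blk P''" by simp
  show ?case
    by (rule exI[of _ ?g], rule exI[of _ P''], intro conjI g1 g2 g3 P''(2))
qed



lemma good_cs: "good n P M \<Longrightarrow> coalition_structure 1 n (\<lambda>_. {0}) (blk P)"
  unfolding good_def coalition_structure_def is_coalition_def
  using supp00 by (auto simp: is_point_def)

lemma good_init: "good n ((\<lambda>i. {i}) ` {..<n}) (rep n)"
proof -
  have inj: "inj_on (\<lambda>i::nat. {i}) {..<n}" by (auto simp: inj_on_def)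
  have "image_mset card (mset_set ((\<lambda>i. {i}) ` {..<n})) = image_mset card (image_mset (\<lambda>i::nat. {i}) (mset_set {..<n}))"
    using image_mset_mset_set[OF inj] by simp
  also have "\<dots> = image_mset (\<lambda>_. 1) (mset_set {..<n})" by (simp add: multiset.map_comp comp_def)
  also have "\<dots> = rep n" by (simp add: image_mset_const_eq)
  finally show ?thesis unfolding good_def by auto
qed

theorem mainTheorem4:
  fixes k :: nat
  assumes "k \<ge> 2"
  shows "\<exists>c::real. c > 0 \<and>
    (\<forall>N::nat. \<exists>n\<ge>N. \<exists>(d::nat) (pos :: nat \<Rightarrow> nat set)
        (f :: nat \<Rightarrow> (nat set \<times> nat set) set) (m::nat).
       (\<forall>i<n. is_point d (pos i)) \<and>
       coalition_structure d n pos (f 0) \<and>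
       (\<forall>j<m. compromise_transition d n pos k (f j) (f (Suc j))) \<and>
       real m \<ge> c * 2 powr (sqrt (real n) / 2))"
proof (rule exI[of _ "1/2"], intro conjI allI)
  show "(0::real) < 1/2" by simp
  fix N :: nat
  define t where "t = Suc N"
  define n where "n = t*(t+1) + t"
  have r1: "lreach (rep n) (low0 t + rep t) 0"
    using build[of "{#}" t t] unfolding n_def by simp
  have r2: "lreach (low0 t + rep t) (low1 t + rep 0) (2^t - 1)"
    using counter[of t t "{#}"] by simp
  from lreach_trans[OF r1 r2] obtain m where m: "m \<ge> 2^t - 1" "(astep ^^ m) (rep n) (low1 t)"
    unfolding lreach_def by auto
  obtain f P' where f: "f 0 = blk ((\<lambda>i. {i}) ` {..<n})"
    "\<forall>j<m. compromise_transition 1 n (\<lambda>_. {0}) k (f j) (f (Suc j))"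
    using conc_chain0[OF m(2) good_init assms] by (elim exE conjE) (rule that)
  have cs: "coalition_structure 1 n (\<lambda>_. {0}) (f 0)" using f(1) good_cs[OF good_init] by simp
  have ip: "\<forall>i<n. is_point 1 ((\<lambda>_. {0}) i)" by (simp add: is_point_def)
  have t1: "t \<ge> 1" unfolding t_def by simp
  have nle: "real n \<le> (real t + 1)^2" unfolding n_def by (simp add: power2_eq_square algebra_simps)
  have "sqrt (real n) \<le> sqrt ((real t + 1)^2)" by (rule real_sqrt_le_mono[OF nle])
  then have "sqrt (real n) \<le> real t + 1" by simp
  then have sq: "sqrt (real n) / 2 \<le> real t" using t1 by simp
  have "(2::real) powr (sqrt (real n) / 2) \<le> 2 powr (real t)" using sq by (intro powr_mono) auto
  also have "\<dots> = 2 ^ t" by (simp add: powr_realpow)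
  finally have p: "(2::real) powr (sqrt (real n) / 2) \<le> 2 ^ t" .
  have "(2::real) ^ 1 \<le> 2 ^ t" by (rule power_increasing[OF t1]) simp
  then have "(2::real) ^ t \<ge> 2" by simp
  moreover have "real m \<ge> 2 ^ t - 1"
  proof -
    have "(1::nat) \<le> 2 ^ t" by simp
    then have "real (2 ^ t - 1 :: nat) = 2 ^ t - 1" by (simp add: of_nat_diff)
    moreover have "real (2 ^ t - 1 :: nat) \<le> real m" using m(1) by (simp only: of_nat_le_iff)
    ultimately show ?thesis by simp
  qed
  ultimately have fin: "1/2 * 2 powr (sqrt (real n) / 2) \<le> real m" using p by linarith
  have nN: "n \<ge> N" unfolding n_def t_def by simp
  show "\<exists>n\<ge>N. \<exists>(d::nat) (pos :: nat \<Rightarrow> nat set)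
        (f :: nat \<Rightarrow> (nat set \<times> nat set) set) (m::nat).
       (\<forall>i<n. is_point d (pos i)) \<and>
       coalition_structure d n pos (f 0) \<and>
       (\<forall>j<m. compromise_transition d n pos k (f j) (f (Suc j))) \<and>
       real m \<ge> 1/2 * 2 powr (sqrt (real n) / 2)"
    apply (rule exI[of _ n], rule conjI[OF nN])
    apply (rule exI[of _ 1], rule exI[of _ "\<lambda>_. {0}"], rule exI[of _ f], rule exI[of _ m])
    using cs f(2) ip fin by (intro conjI)
qed


end
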